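(* Let $\mathcal C$ be a clustering problem, and let $P\in\mathcal P(\mathcal X)^K$ with $\tfrac12\ge p_{\min}=\min_{i\in[K]}\min_{a\in\mathcal X}P_i(a)>0$. Let $\epsilon\in(0,p_{\min}/2)$. Then for all $Q\in\mathcal P(\mathcal X)^K$ with $\|P-Q\|_\infty\le\epsilon$, all $w\in\mathrm{int}(\Sigma_K)$ and all $\sigma\in\mathcal C$, $$|g_P^\sigma(w)-g_Q^\sigma(w)|\le E\epsilon,\qquad |G_P^\sigma(w)-G_Q^\sigma(w)|\le E\epsilon,\qquad E=|\mathcal X|\log\frac{2-p_{\min}}{p_{\min}}.$$
   Context: Framework. Let $\mathcal X$ be a finite alphabet with $|\mathcal X|\ge2$, $\mathcal P(\mathcal X)$ the set of probability distributions on $\mathcal X$, and $K\ge2$ an integer (number of arms); $[n]=\{1,\dots,n\}$. A hypothesis is a collection $\sigma=\{\mathcal A_1^\sigma,\dots,\mathcal A_{M_\sigma}^\sigma\}$ ($M_\sigma\ge1$) of pairwise disjoint subsets of $[K]$, each of cardinality at least 2 (clusters). A clustering problem is a finite set $\mathcal C$ of hypotheses with $|\mathcal C|\ge2$. For $P,Q\in\mathcal P(\mathcal X)^K$, $\|P-Q\|_\infty=\max_{i\in[K]}\max_{a\in\mathcal X}|P_i(a)-Q_i(a)|$. Functions. $D(P\|Q)$ is the KL divergence. $\Sigma_K=\{w\in\mathbb R^K: w_i\ge0,\sum_iw_i=1\}$, $\mathrm{int}(\Sigma_K)$ its relative interior (all $w_i>0$). For $\mathcal A\subseteq[K]$, $G(P_{\mathcal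 A},w_{\mathcal A})=0$ if $w_i=0$ for all $i\in\mathcal A$, and otherwise $G(P_{\mathcal A},w_{\mathcal A})=\sum_{i\in\mathcal A}w_iD(P_i\|W)$ with $W=\sum_{i\in\mathcal A}w_iP_i/\sum_{i\in\mathcal A}w_i$. For $\sigma\in\mathcal C$, $g_P^\sigma(w)=\sum_{m=1}^{M_\sigma}G(P_{\mathcal A_m^\sigma},w_{\mathcal A_m^\sigma})$ and $G_P^\sigma(w)=\min_{\sigma'\in\mathcal C\setminus\{\sigma\}}g_P^{\sigma'}(w)$. *)

theory Defs
  imports "HOL-Analysis.Analysis"
begin

text \<open>A distribution on 'x is a function 'x => real, nonnegative, summing to 1.
  A vector of K distributions is a function nat => 'x => real (only arms in {1..K} matter).\<close>

definition is_dist :: "('x::finite \<Rightarrow> real) \<Rightarrow> bool" where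
  "is_dist p \<longleftrightarrow> (\<forall>a. p a \<ge> 0) \<and> (\<Sum>a\<in>UNIV. p a) = 1"

definition is_dist_vec :: "nat \<Rightarrow> (nat \<Rightarrow> 'x::finite \<Rightarrow> real) \<Rightarrow> bool" where
  "is_dist_vec K P \<longleftrightarrow> (\<forall>i\<in>{1..K}. is_dist (P i))"

definition KL :: "('x::finite \<Rightarrow> real) \<Rightarrow> ('x \<Rightarrow> real) \<Rightarrow> real" where
  "KL p q = (\<Sum>a\<in>UNIV. if p a = 0 then 0 else p a * ln (p a / q a))"

definition sup_dist :: "nat \<Rightarrow> (nat \<Rightarrow> 'x::finite \<Rightarrow> real) \<Rightarrow> (nat \<Rightarrow> 'x \<Rightarrow> real) \<Rightarrow> real" where
  "sup_dist K P Q = Max {\<bar>P i a - Q i a\<bar> | i a. i \<in> {1..K}}"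

definition p_min :: "nat \<Rightarrow> (nat \<Rightarrow> 'x::finite \<Rightarrow> real) \<Rightarrow> real" where
  "p_min K P = Min {P i a | i a. i \<in> {1..K}}"

definition int_simplex :: "nat \<Rightarrow> (nat \<Rightarrow> real) \<Rightarrow> bool" where
  "int_simplex K w \<longleftrightarrow> (\<forall>i\<in>{1..K}. w i > 0) \<and> (\<Sum>i\<in>{1..K}. w i) = 1"

definition is_hypothesis :: "nat \<Rightarrow> nat set set \<Rightarrow> bool" where
  "is_hypothesis K \<sigma> \<longleftrightarrow> \<sigma> \<noteq> {} \<and>
     (\<forall>A\<in>\<sigma>. A \<subseteq> {1..K} \<and> card A \<ge> 2) \<and>
     (\<forall>A\<in>\<sigma>. \<forall>B\<in>\<sigma>. A \<noteq> B \<longrightarrow> A \<inter> B = {})"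

definition clustering_problem :: "nat \<Rightarrow> nat set set set \<Rightarrow> bool" where
  "clustering_problem K C \<longleftrightarrow> finite C \<and> card C \<ge> 2 \<and> (\<forall>\<sigma>\<in>C. is_hypothesis K \<sigma>)"

definition Gclust :: "(nat \<Rightarrow> 'x::finite \<Rightarrow> real) \<Rightarrow> (nat \<Rightarrow> real) \<Rightarrow> nat set \<Rightarrow> real" where
  "Gclust P w A =
     (if (\<forall>i\<in>A. w i = 0) then 0
      else (let W = (\<lambda>a. (\<Sum>i\<in>A. w i * P i a) / (\<Sum>i\<in>A. w i))
            in (\<Sum>i\<in>A. w i * KL (P i) W)))"

definition g_hyp :: "(nat \<Rightarrow> 'x::finite \<Rightarrow> real) \<Rightarrow> nat set set \<Rightarrow> (nat \<Rightarrow> real) \<Rightarrow> real" where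
  "g_hyp P \<sigma> w = (\<Sum>A\<in>\<sigma>. Gclust P w A)"

definition G_hyp :: "nat set set set \<Rightarrow> (nat \<Rightarrow> 'x::finite \<Rightarrow> real) \<Rightarrow> nat set set \<Rightarrow> (nat \<Rightarrow> real) \<Rightarrow> real" where
  "G_hyp C P \<sigma> w = Min ((\<lambda>\<sigma>'. g_hyp P \<sigma>' w) ` (C - {\<sigma>}))"

end

theory Submission
  imports Defs
begin


lemma phi_lip_lt:
  fixes lo hi x y c :: real
  assumes "0 < lo" "lo \<le> x" "x < y" "y \<le> hi" "c = (ln lo + ln hi)/2"
  shows "\<bar>(y*ln y - (1+c)*y) - (x*ln x - (1+c)*x)\<bar> \<le> (ln hi - ln lo)/2 * \<bar>y-x\<bar>"
proof -
  have "\<exists>z. x < z \<and> z < y \<and> (y*ln y - (1+c)*y) - (x*ln x - (1+c)*x) = (y - x) * (ln z - c)"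
  proof (rule MVT2[OF \<open>x<y\<close>])
    fix t assume "x \<le> t" "t \<le> y"
    then have "t > 0" using assms by linarith
    then show "DERIV (\<lambda>t. t*ln t - (1+c)*t) t :> ln t - c"
      by (auto intro!: derivative_eq_intros)
  qed
  then obtain z where z: "x < z" "z < y" "(y*ln y - (1+c)*y) - (x*ln x - (1+c)*x) = (y - x) * (ln z - c)" by blast
  have "ln lo \<le> ln z" "ln z \<le> ln hi" using z assms by auto
  then have "\<bar>ln z - c\<bar> \<le> (ln hi - ln lo)/2" unfolding assms(5) abs_le_iff by (auto simp: field_simps)
  then have "\<bar>(y - x) * (ln z - c)\<bar> \<le> \<bar>y-x\<bar> * ((ln hi - ln lo)/2)"
    unfolding abs_mult by (intro mult_left_mono) auto
  then show ?thesis using z by (simp add: mult.commute)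
qed

lemma phi_lip:
  fixes lo hi x y c :: real
  assumes "0 < lo" "lo \<le> x" "x \<le> hi" "lo \<le> y" "y \<le> hi" "c = (ln lo + ln hi)/2"
  shows "\<bar>(x*ln x - (1+c)*x) - (y*ln y - (1+c)*y)\<bar> \<le> (ln hi - ln lo)/2 * \<bar>x-y\<bar>"
proof -
  consider "x < y" | "x = y" | "y < x" by linarith
  then show ?thesis
  proof cases
    case 1 show ?thesis using phi_lip_lt[of lo x y hi c, OF assms(1) assms(2) 1 assms(5) assms(6)] by (simp only: abs_minus_commute)
  next
    case 3 show ?thesis using phi_lip_lt[of lo y x hi c, OF assms(1) assms(4) 3 assms(3) assms(6)] .
  qed simp
qed

lemma min_diff:
  fixes f g :: "'a \<Rightarrow> real"
  assumes "finite S" "S \<noteq> {}" "\<And>x. x \<in> S \<Longrightarrow> \<bar>f x - g x\<bar> \<le> B"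
  shows "\<bar>Min (f ` S) - Min (g ` S)\<bar> \<le> B"
proof -
  have "Min (g ` S) \<in> g ` S" using assms by (intro Min_in) auto
  then obtain x0 where x0: "x0 \<in> S" "Min (g ` S) = g x0" by auto
  have "Min (f ` S) \<in> f ` S" using assms by (intro Min_in) auto
  then obtain x1 where x1: "x1 \<in> S" "Min (f ` S) = f x1" by auto
  have "Min (f ` S) \<le> f x0" using assms x0 by auto
  moreover have "Min (g ` S) \<le> g x1" using assms x1 by auto
  ultimately show ?thesis using assms(3)[OF x0(1)] assms(3)[OF x1(1)] x0 x1
    by (simp add: abs_le_iff)
qed



lemma cluster_form:
  fixes P :: "nat \<Rightarrow> 'x::finite \<Rightarrow> real"
  assumes "finite A" "A \<noteq> {}" "\<forall>i\<in>A. w i > 0" "\<forall>i\<in>A. \<forall>a. P i a > 0"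
  shows "Gclust P w A = (\<Sum>i\<in>A. w i * (\<Sum>a\<in>UNIV. P i a * ln (P i a)))
     - (\<Sum>i\<in>A. w i) * (\<Sum>a\<in>UNIV. (\<Sum>i\<in>A. w i * P i a)/(\<Sum>i\<in>A. w i) * ln ((\<Sum>i\<in>A. w i * P i a)/(\<Sum>i\<in>A. w i)))"
proof -
  define s where "s = (\<Sum>i\<in>A. w i)"
  define W where "W = (\<lambda>a. (\<Sum>i\<in>A. w i * P i a) / s)"
  have s: "s > 0" unfolding s_def using assms by (intro sum_pos) auto
  have Wpos: "W a > 0" for a unfolding W_def using assms s
    by (intro divide_pos_pos sum_pos) auto
  have nz: "\<not> (\<forall>i\<in>A. w i = 0)" using assms by fastforce
  have KL: "KL (P i) W = (\<Sum>a\<in>UNIV. P i a * ln (P i a)) - (\<Sum>a\<in>UNIV. P i a * ln (W a))" if "i \<in> A" for i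
  proof -
    have "KL (P i) W = (\<Sum>a\<in>UNIV. P i a * ln (P i a) - P i a * ln (W a))"
      unfolding KL_def using assms that Wpos
      by (intro sum.cong refl) (simp add: ln_div right_diff_distrib less_imp_neq[OF Wpos, symmetric])
    then show ?thesis by (simp add: sum_subtractf)
  qed
  have "Gclust P w A = (\<Sum>i\<in>A. w i * KL (P i) W)"
    unfolding Gclust_def Let_def W_def s_def using nz by simp
  also have "\<dots> = (\<Sum>i\<in>A. w i * (\<Sum>a\<in>UNIV. P i a * ln (P i a))) - (\<Sum>i\<in>A. w i * (\<Sum>a\<in>UNIV. P i a * ln (W a)))"
    using KL by (simp add: right_diff_distrib sum_subtractf)
  also have "(\<Sum>i\<in>A. w i * (\<Sum>a\<in>UNIV. P i a * ln (W a))) = (\<Sum>a\<in>UNIV. \<Sum>i\<in>A. w i * P i a * ln (W a))"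
    by (simp add: sum_distrib_left sum.swap[of _ A] mult.assoc)
  also have "\<dots> = (\<Sum>a\<in>UNIV. (\<Sum>i\<in>A. w i * P i a) * ln (W a))"
    by (simp add: sum_distrib_right)
  also have "\<dots> = (\<Sum>a\<in>UNIV. s * (W a * ln (W a)))"
    unfolding W_def using s by simp
  also have "\<dots> = s * (\<Sum>a\<in>UNIV. W a * ln (W a))" by (simp add: sum_distrib_left)
  finally show ?thesis unfolding W_def s_def .
qed



lemma ent_diff:
  fixes u v :: "'x::finite \<Rightarrow> real"
  assumes "0 < lo" "(\<Sum>a\<in>UNIV. u a) = 1" "(\<Sum>a\<in>UNIV. v a) = 1"
    "\<And>a. lo \<le> u a \<and> u a \<le> hi \<and> lo \<le> v a \<and> v a \<le> hi \<and> \<bar>u a - v a\<bar> \<le> \<epsilon>"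
  shows "\<bar>(\<Sum>a\<in>UNIV. u a * ln (u a)) - (\<Sum>a\<in>UNIV. v a * ln (v a))\<bar>
           \<le> real CARD('x) * ((ln hi - ln lo)/2 * \<epsilon>)"
proof -
  define c where "c = (ln lo + ln hi)/2"
  define phi where "phi = (\<lambda>x::real. x * ln x - (1+c)*x)"
  have "(\<Sum>a\<in>UNIV. u a * ln (u a)) - (\<Sum>a\<in>UNIV. v a * ln (v a))
      = (\<Sum>a\<in>UNIV. phi (u a) - phi (v a)) + (1+c) * ((\<Sum>a\<in>UNIV. u a) - (\<Sum>a\<in>UNIV. v a))"
  proof -
    have "(\<Sum>a\<in>UNIV. phi (u a) - phi (v a)) = ((\<Sum>a\<in>UNIV. u a * ln (u a)) - (\<Sum>a\<in>UNIV. (1+c) * u a))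
       - ((\<Sum>a\<in>UNIV. v a * ln (v a)) - (\<Sum>a\<in>UNIV. (1+c) * v a))"
      unfolding phi_def by (simp only: sum_subtractf)
    then show ?thesis by (simp add: sum_distrib_left[symmetric] right_diff_distrib)
  qed
  also have "\<dots> = (\<Sum>a\<in>UNIV. phi (u a) - phi (v a))" using assms by simp
  finally have eq: "(\<Sum>a\<in>UNIV. u a * ln (u a)) - (\<Sum>a\<in>UNIV. v a * ln (v a)) = (\<Sum>a\<in>UNIV. phi (u a) - phi (v a))" .
  have "\<bar>\<Sum>a\<in>UNIV. phi (u a) - phi (v a)\<bar> \<le> (\<Sum>a\<in>UNIV. \<bar>phi (u a) - phi (v a)\<bar>)"
    by (rule sum_abs)
  also have "\<dots> \<le> (\<Sum>a\<in>(UNIV::'x set). (ln hi - ln lo)/2 * \<epsilon>)"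
  proof (rule sum_mono)
    fix a :: 'x
    have b: "lo \<le> u a" "u a \<le> hi" "lo \<le> v a" "v a \<le> hi" "\<bar>u a - v a\<bar> \<le> \<epsilon>" using assms(4)[of a] by auto
    have M: "0 \<le> (ln hi - ln lo)/2" using b assms(1) by simp
    have "\<bar>phi (u a) - phi (v a)\<bar> \<le> (ln hi - ln lo)/2 * \<bar>u a - v a\<bar>"
      unfolding phi_def using phi_lip[OF assms(1) b(1-4) c_def] .
    also have "\<dots> \<le> (ln hi - ln lo)/2 * \<epsilon>" using M b(5) by (rule mult_left_mono[rotated])
    finally show "\<bar>phi (u a) - phi (v a)\<bar> \<le> (ln hi - ln lo)/2 * \<epsilon>" .
  qed
  also have "\<dots> = real CARD('x) * ((ln hi - ln lo)/2 * \<epsilon>)" by simp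
  finally show ?thesis using eq by simp
qed



lemma cluster_diff:
  fixes P Q :: "nat \<Rightarrow> 'x::finite \<Rightarrow> real"
  assumes "finite A" "A \<noteq> {}" "\<forall>i\<in>A. w i > 0" "0 < lo"
    "\<forall>i\<in>A. (\<Sum>a\<in>UNIV. P i a) = 1" "\<forall>i\<in>A. (\<Sum>a\<in>UNIV. Q i a) = 1"
    "\<forall>i\<in>A. \<forall>a. lo \<le> P i a \<and> P i a \<le> hi \<and> lo \<le> Q i a \<and> Q i a \<le> hi \<and> \<bar>P i a - Q i a\<bar> \<le> \<epsilon>"
  shows "\<bar>Gclust P w A - Gclust Q w A\<bar> \<le> (\<Sum>i\<in>A. w i) * (real CARD('x) * (ln hi - ln lo) * \<epsilon>)"
proof -
  define s where "s = (\<Sum>i\<in>A. w i)"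
  define B where "B = real CARD('x) * ((ln hi - ln lo)/2 * \<epsilon>)"
  define WP where "WP = (\<lambda>a. (\<Sum>i\<in>A. w i * P i a) / s)"
  define WQ where "WQ = (\<lambda>a. (\<Sum>i\<in>A. w i * Q i a) / s)"
  have s: "s > 0" unfolding s_def using assms by (intro sum_pos) auto
  have Ppos: "\<forall>i\<in>A. \<forall>a. P i a > 0" "\<forall>i\<in>A. \<forall>a. Q i a > 0"
    using assms(4,7) by (auto intro: less_le_trans)
  have fP: "Gclust P w A = (\<Sum>i\<in>A. w i * (\<Sum>a\<in>UNIV. P i a * ln (P i a))) - s * (\<Sum>a\<in>UNIV. WP a * ln (WP a))"
    unfolding s_def WP_def by (rule cluster_form[OF assms(1-3) Ppos(1)])
  have fQ: "Gclust Q w A = (\<Sum>i\<in>A. w i * (\<Sum>a\<in>UNIV. Q i a * ln (Q i a))) - s * (\<Sum>a\<in>UNIV. WQ a * ln (WQ a))"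
    unfolding s_def WQ_def by (rule cluster_form[OF assms(1-3) Ppos(2)])
  have wsum: "(\<Sum>a\<in>UNIV. (\<Sum>i\<in>A. w i * R i a) / s) = 1" if "\<forall>i\<in>A. (\<Sum>a\<in>UNIV. R i a) = 1" for R :: "nat \<Rightarrow> 'x \<Rightarrow> real"
  proof -
    have "(\<Sum>a\<in>UNIV. (\<Sum>i\<in>A. w i * R i a) / s) = (\<Sum>i\<in>A. w i * (\<Sum>a\<in>UNIV. R i a)) / s"
      by (simp add: sum_divide_distrib[symmetric] sum.swap[of _ A] sum_distrib_left)
    also have "\<dots> = 1" using that s by (simp add: s_def)
    finally show ?thesis .
  qed
  have wlo: "lo \<le> (\<Sum>i\<in>A. w i * R i a) / s" if "\<forall>i\<in>A. lo \<le> R i a" for R :: "nat \<Rightarrow> 'x \<Rightarrow> real" and a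
  proof -
    have "s * lo = (\<Sum>i\<in>A. w i * lo)" by (simp add: s_def sum_distrib_right)
    also have "\<dots> \<le> (\<Sum>i\<in>A. w i * R i a)" using that assms(3)
      by (intro sum_mono mult_left_mono) auto
    finally show ?thesis using s by (simp add: field_simps)
  qed
  have whi: "(\<Sum>i\<in>A. w i * R i a) / s \<le> hi" if "\<forall>i\<in>A. R i a \<le> hi" for R :: "nat \<Rightarrow> 'x \<Rightarrow> real" and a
  proof -
    have "(\<Sum>i\<in>A. w i * R i a) \<le> (\<Sum>i\<in>A. w i * hi)" using that assms(3)
      by (intro sum_mono mult_left_mono) auto
    also have "\<dots> = s * hi" by (simp add: s_def sum_distrib_right)
    finally show ?thesis using s by (simp add: field_simps)
  qed
  have wdiff: "\<bar>WP a - WQ a\<bar> \<le> \<epsilon>" for a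
  proof -
    have "WP a - WQ a = (\<Sum>i\<in>A. w i * (P i a - Q i a)) / s"
      unfolding WP_def WQ_def by (simp add: diff_divide_distrib sum_subtractf right_diff_distrib)
    moreover have "\<bar>\<Sum>i\<in>A. w i * (P i a - Q i a)\<bar> \<le> s * \<epsilon>"
    proof -
      have "\<bar>\<Sum>i\<in>A. w i * (P i a - Q i a)\<bar> \<le> (\<Sum>i\<in>A. \<bar>w i * (P i a - Q i a)\<bar>)" by (rule sum_abs)
      also have "\<dots> \<le> (\<Sum>i\<in>A. w i * \<epsilon>)" using assms(3,7)
        by (intro sum_mono) (auto simp: abs_mult intro!: mult_left_mono)
      also have "\<dots> = s * \<epsilon>" by (simp add: s_def sum_distrib_right)
      finally show ?thesis .
    qed
    ultimately have "\<bar>WP a - WQ a\<bar> = \<bar>\<Sum>i\<in>A. w i * (P i a - Q i a)\<bar> / s" "\<bar>\<Sum>i\<in>A. w i * (P i a - Q i a)\<bar> \<le> \<epsilon> * s"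
      using s by (simp_all add: abs_divide mult.commute)
    then show ?thesis using s by (simp add: pos_divide_le_eq)
  qed
  have eW: "\<bar>(\<Sum>a\<in>UNIV. WP a * ln (WP a)) - (\<Sum>a\<in>UNIV. WQ a * ln (WQ a))\<bar> \<le> B"
    unfolding B_def
  proof (rule ent_diff[OF assms(4)])
    show "(\<Sum>a\<in>UNIV. WP a) = 1" unfolding WP_def using wsum assms(5) by blast
    show "(\<Sum>a\<in>UNIV. WQ a) = 1" unfolding WQ_def using wsum assms(6) by blast
    fix a
    show "lo \<le> WP a \<and> WP a \<le> hi \<and> lo \<le> WQ a \<and> WQ a \<le> hi \<and> \<bar>WP a - WQ a\<bar> \<le> \<epsilon>"
      unfolding WP_def WQ_def using wlo whi wdiff[of a] assms(7) unfolding WP_def WQ_def by auto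
  qed
  have eI: "\<bar>(\<Sum>a\<in>UNIV. P i a * ln (P i a)) - (\<Sum>a\<in>UNIV. Q i a * ln (Q i a))\<bar> \<le> B" if "i \<in> A" for i
    unfolding B_def using that assms(5,6,7) by (intro ent_diff[OF assms(4)]) auto
  define D where "D = (\<lambda>i. (\<Sum>a\<in>UNIV. P i a * ln (P i a)) - (\<Sum>a\<in>UNIV. Q i a * ln (Q i a)))"
  define E where "E = (\<Sum>a\<in>UNIV. WP a * ln (WP a)) - (\<Sum>a\<in>UNIV. WQ a * ln (WQ a))"
  have "Gclust P w A - Gclust Q w A = (\<Sum>i\<in>A. w i * D i) - s * E"
    unfolding fP fQ D_def E_def by (simp add: right_diff_distrib sum_subtractf)
  also have "\<bar>\<dots>\<bar> \<le> \<bar>\<Sum>i\<in>A. w i * D i\<bar> + \<bar>s * E\<bar>"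
    by (rule abs_triangle_ineq4)
  also have "\<dots> \<le> s * B + s * B"
  proof (rule add_mono)
    have "\<bar>\<Sum>i\<in>A. w i * D i\<bar> \<le> (\<Sum>i\<in>A. \<bar>w i * D i\<bar>)" by (rule sum_abs)
    also have "\<dots> \<le> (\<Sum>i\<in>A. w i * B)"
    proof (rule sum_mono)
      fix i assume i: "i \<in> A"
      have wi: "w i > 0" using assms(3) i by blast
      have "\<bar>w i * D i\<bar> = w i * \<bar>D i\<bar>" using wi by (simp add: abs_mult)
      also have "\<dots> \<le> w i * B" using eI[OF i] assms(3) i unfolding D_def
        by (intro mult_left_mono) auto
      finally show "\<bar>w i * D i\<bar> \<le> w i * B" .
    qed
    also have "\<dots> = s * B" by (simp add: s_def sum_distrib_right)
    finally show "\<bar>\<Sum>i\<in>A. w i * D i\<bar> \<le> s * B" .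
    have "\<bar>s * E\<bar> = s * \<bar>E\<bar>" using s by (simp add: abs_mult)
    also have "\<dots> \<le> s * B" using s eW unfolding E_def by (intro mult_left_mono) auto
    finally show "\<bar>s * E\<bar> \<le> s * B" .
  qed
  also have "\<dots> = s * (real CARD('x) * (ln hi - ln lo) * \<epsilon>)" by (simp add: B_def algebra_simps)
  finally show ?thesis unfolding s_def .
qed



theorem lemma6:
  fixes K :: nat and C :: "nat set set set"
    and P :: "nat \<Rightarrow> 'x::finite \<Rightarrow> real" and \<epsilon> :: real
  assumes "CARD('x) \<ge> 2" and "K \<ge> 2"
    and "clustering_problem K C"
    and "is_dist_vec K P"
    and "p_min K P > 0" and "p_min K P \<le> 1/2"
    and "0 < \<epsilon>" and "\<epsilon> < p_min K P / 2"
  shows "\<forall>Q w \<sigma>. is_dist_vec K Q \<and> sup_dist K P Q \<le> \<epsilon> \<and> int_simplex K w \<and> \<sigma> \<in> C \<longrightarrow>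
           \<bar>g_hyp P \<sigma> w - g_hyp Q \<sigma> w\<bar> \<le> real CARD('x) * ln ((2 - p_min K P) / p_min K P) * \<epsilon> \<and>
           \<bar>G_hyp C P \<sigma> w - G_hyp C Q \<sigma> w\<bar> \<le> real CARD('x) * ln ((2 - p_min K P) / p_min K P) * \<epsilon>"
proof (intro allI impI)
  fix Q :: "nat \<Rightarrow> 'x \<Rightarrow> real" and w :: "nat \<Rightarrow> real" and \<sigma> :: "nat set set"
  assume H: "is_dist_vec K Q \<and> sup_dist K P Q \<le> \<epsilon> \<and> int_simplex K w \<and> \<sigma> \<in> C"
  define p where "p = p_min K P"
  define lo where "lo = p / 2"
  define hi where "hi = 1 - p / 2"
  define E where "E = real CARD('x) * ln ((2 - p) / p) * \<epsilon>"
  have p: "0 < p" "p \<le> 1/2" "\<epsilon> < p/2" using assms unfolding p_def by auto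
  have lo: "0 < lo" unfolding lo_def using p by simp
  have Pd: "\<And>i a. i \<in> {1..K} \<Longrightarrow> P i a \<ge> 0" "\<And>i. i \<in> {1..K} \<Longrightarrow> (\<Sum>a\<in>UNIV. P i a) = 1"
    using assms(4) unfolding is_dist_vec_def is_dist_def by auto
  have Qd: "\<And>i. i \<in> {1..K} \<Longrightarrow> (\<Sum>a\<in>UNIV. Q i a) = 1"
    using H unfolding is_dist_vec_def is_dist_def by auto
  have w: "\<And>i. i \<in> {1..K} \<Longrightarrow> w i > 0" "(\<Sum>i\<in>{1..K}. w i) = 1"
    using H unfolding int_simplex_def by auto
  have fin1: "finite {P i a | i a. i \<in> {1..K}}"
  proof -
    have "{P i a | i a. i \<in> {1..K}} = (\<lambda>(i,a). P i a) ` ({1..K} \<times> UNIV)" by auto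
    then show ?thesis by simp
  qed
  have fin2: "finite {\<bar>P i a - Q i a\<bar> | i a. i \<in> {1..K}}"
  proof -
    have "{\<bar>P i a - Q i a\<bar> | i a. i \<in> {1..K}} = (\<lambda>(i,a). \<bar>P i a - Q i a\<bar>) ` ({1..K} \<times> UNIV)" by auto
    then show ?thesis by simp
  qed
  have Plow: "p \<le> P i a" if "i \<in> {1..K}" for i a
    unfolding p_def p_min_def using fin1 that by (intro Min_le) auto
  have dif: "\<bar>P i a - Q i a\<bar> \<le> \<epsilon>" if "i \<in> {1..K}" for i a
  proof -
    have "\<bar>P i a - Q i a\<bar> \<le> sup_dist K P Q"
      unfolding sup_dist_def using fin2 that by (intro Max_ge) auto
    then show ?thesis using H by linarith
  qed
  have Pup: "P i a \<le> 1 - p" if i: "i \<in> {1..K}" for i a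
  proof -
    have "\<exists>b::'x. b \<noteq> a"
    proof (rule ccontr)
      assume "\<not> (\<exists>b::'x. b \<noteq> a)"
      then have "(UNIV::'x set) = {a}" by auto
      then have "card (UNIV::'x set) = card {a}" by (simp only:)
      then have "CARD('x) = 1" by simp
      then show False using assms(1) by linarith
    qed
    then obtain b :: 'x where b: "b \<noteq> a" by blast
    have "P i a + P i b = (\<Sum>c\<in>{a,b}. P i c)" using b by simp
    also have "\<dots> \<le> (\<Sum>c\<in>UNIV. P i c)" using Pd(1)[OF i] by (intro sum_mono2) auto
    finally show ?thesis using Pd(2)[OF i] Plow[OF i, of b] by linarith
  qed
  have bnd: "\<forall>i\<in>A. \<forall>a. lo \<le> P i a \<and> P i a \<le> hi \<and> lo \<le> Q i a \<and> Q i a \<le> hi \<and> \<bar>P i a - Q i a\<bar> \<le> \<epsilon>"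
    if "A \<subseteq> {1..K}" for A
  proof (intro ballI allI)
    fix i a assume "i \<in> A"
    then have i: "i \<in> {1..K}" using that by auto
    show "lo \<le> P i a \<and> P i a \<le> hi \<and> lo \<le> Q i a \<and> Q i a \<le> hi \<and> \<bar>P i a - Q i a\<bar> \<le> \<epsilon>"
      using Plow[OF i, of a] Pup[OF i, of a] dif[OF i, of a] p unfolding lo_def hi_def
      by (auto simp: abs_le_iff)
  qed
  have lnEq: "ln hi - ln lo = ln ((2 - p) / p)"
  proof -
    have "hi > 0" unfolding hi_def using p by simp
    then have "ln hi - ln lo = ln (hi / lo)" using lo by (simp add: ln_div)
    also have "hi / lo = (2 - p) / p" unfolding hi_def lo_def using p by (simp add: field_simps)
    finally show ?thesis .
  qed
  have E0: "E \<ge> 0" unfolding E_def using p \<open>0 < \<epsilon>\<close> by (intro mult_nonneg_nonneg) (auto simp: field_simps)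
  have gb: "\<bar>g_hyp P \<sigma>' w - g_hyp Q \<sigma>' w\<bar> \<le> E" if s': "\<sigma>' \<in> C" for \<sigma>'
  proof -
    have hyp: "is_hypothesis K \<sigma>'" using assms(3) s' unfolding clustering_problem_def by auto
    have sub: "\<And>A. A \<in> \<sigma>' \<Longrightarrow> A \<subseteq> {1..K}" and c2: "\<And>A. A \<in> \<sigma>' \<Longrightarrow> card A \<ge> 2"
      and disj: "\<forall>A\<in>\<sigma>'. \<forall>B\<in>\<sigma>'. A \<noteq> B \<longrightarrow> A \<inter> B = {}"
      using hyp unfolding is_hypothesis_def by auto
    have finA: "\<And>A. A \<in> \<sigma>' \<Longrightarrow> finite A" using sub finite_subset by blast
    have fins: "finite \<sigma>'"
      using sub by (intro finite_subset[of \<sigma>' "Pow {1..K}"]) auto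
    have cl: "\<bar>Gclust P w A - Gclust Q w A\<bar> \<le> (\<Sum>i\<in>A. w i) * E" if A: "A \<in> \<sigma>'" for A
    proof -
      have "A \<noteq> {}" using c2[OF A] by auto
      moreover have "\<forall>i\<in>A. w i > 0" "\<forall>i\<in>A. (\<Sum>a\<in>UNIV. P i a) = 1" "\<forall>i\<in>A. (\<Sum>a\<in>UNIV. Q i a) = 1"
        using sub[OF A] w(1) Pd(2) Qd by auto
      ultimately have "\<bar>Gclust P w A - Gclust Q w A\<bar> \<le> (\<Sum>i\<in>A. w i) * (real CARD('x) * (ln hi - ln lo) * \<epsilon>)"
        using cluster_diff[OF finA[OF A] _ _ lo _ _ bnd[OF sub[OF A]]] by blast
      then show ?thesis unfolding E_def lnEq .
    qed
    have "\<bar>g_hyp P \<sigma>' w - g_hyp Q \<sigma>' w\<bar> = \<bar>\<Sum>A\<in>\<sigma>'. Gclust P w A - Gclust Q w A\<bar>"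
      unfolding g_hyp_def by (simp add: sum_subtractf)
    also have "\<dots> \<le> (\<Sum>A\<in>\<sigma>'. \<bar>Gclust P w A - Gclust Q w A\<bar>)" by (rule sum_abs)
    also have "\<dots> \<le> (\<Sum>A\<in>\<sigma>'. (\<Sum>i\<in>A. w i) * E)" using cl by (rule sum_mono)
    also have "\<dots> = (\<Sum>A\<in>\<sigma>'. (\<Sum>i\<in>A. w i)) * E" by (simp add: sum_distrib_right)
    also have "(\<Sum>A\<in>\<sigma>'. (\<Sum>i\<in>A. w i)) = (\<Sum>i\<in>\<Union>\<sigma>'. w i)"
      using sum.Union_disjoint[of \<sigma>' w] finA disj by simp
    also have "\<dots> \<le> (\<Sum>i\<in>{1..K}. w i)"
      using sub w(1) by (intro sum_mono2) (auto intro: less_imp_le)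
    finally have "\<bar>g_hyp P \<sigma>' w - g_hyp Q \<sigma>' w\<bar> \<le> (\<Sum>i\<in>{1..K}. w i) * E"
      using E0 by (simp add: mult_right_mono)
    then show ?thesis using w(2) by simp
  qed
  have "\<sigma> \<in> C" using H by blast
  have Cfin: "finite C" "card C \<ge> 2" using assms(3) unfolding clustering_problem_def by auto
  have ne: "C - {\<sigma>} \<noteq> {}"
  proof
    assume "C - {\<sigma>} = {}"
    then have "C \<subseteq> {\<sigma>}" by auto
    then have "card C \<le> 1" using card_mono[of "{\<sigma>}" C] by simp
    then show False using Cfin by simp
  qed
  have "\<bar>G_hyp C P \<sigma> w - G_hyp C Q \<sigma> w\<bar> \<le> E"
    unfolding G_hyp_def using Cfin(1) ne gb by (intro min_diff) auto
  then show "\<bar>g_hyp P \<sigma> w - g_hyp Q \<sigma> w\<bar> \<le> real CARD('x) * ln ((2 - p_min K P) / p_min K P) * \<epsilon> \<and>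
           \<bar>G_hyp C P \<sigma> w - G_hyp C Q \<sigma> w\<bar> \<le> real CARD('x) * ln ((2 - p_min K P) / p_min K P) * \<epsilon>"
    using gb[OF \<open>\<sigma> \<in> C\<close>] unfolding E_def p_def by simp
qed


end
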